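(* Consider algorithm TRIEST-IMPR (described in the context) run with integer parameter $M\ge 6$ on an insertion-only edge stream. Then $\tau^{(t)}=|\Delta^{(t)}|$ if $t\le M$, and $\mathbb{E}\left[\tau^{(t)}\right]=|\Delta^{(t)}|$ if $t>M$.
   Context: An insertion-only edge stream: at each time step $t=1,2,\dots$ an edge $e_t=\{u,v\}$ between two distinct vertices arrives, which is not already present; $G^{(t)}=(V^{(t)},E^{(t)})$ with $E^{(t)}=\{e_1,\dots,e_t\}$. A triangle in $G^{(t)}$ is a set of three edges $\{\{u,v\},\{v,w\},\{w,u\}\}\subseteq E^{(t)}$ with $u,v,w$ distinct; $\Delta^{(t)}$ is the set of all triangles of $G^{(t)}$. TRIEST-IMPR maintains an edge sample $\mathcal{S}$ (initially empty) and a counter $\tau$ (initially $0$). At time $t$, when $e_t=\{u,v\}$ arrives: first, $\tau$ is increased by $\eta^{(t)}\cdot|\mathcal{N}^{\mathcal{S}}_{u,v}|$, where $\eta^{(t)}=\max\{1,(t-1)(t-2)/(M(M-1))\}$ and $|\mathcal{N}^{\mathcal{S}}_{u,v}|$ is the number of vertices $c$ with both $\{c,u\}$ and $\{c,v\}$ in the current $\mathcal{S}$; then $\mathcal{S}$ is updated by reservoir sampling: if $t\le M$, $e_t$ is inserted into $\mathcal{S}$; if $t>M$, with probability $M/t$ an edge chosen uniformly at random from $\mathcal{S}$ is removed and $e_t$ is inserted, otherwise $\mathcal{S}$ is unchanged. The counter is never decreased. $\tau^{(t)}$ is the value of $\tau$ at the end of time step $t$, and is the algorithm's estimate of $|\Delta^{(t)}|$.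 *)

theory Defs
  imports "HOL-Probability.Probability"
begin

text \<open>An edge stream is a function e :: nat => 'a * 'a; the edge arriving at time t (t >= 1)
  is the unordered pair {fst (e t), snd (e t)}.\<close>

definition edge_at :: "(nat \<Rightarrow> 'a \<times> 'a) \<Rightarrow> nat \<Rightarrow> 'a set" where
  "edge_at e t = {fst (e t), snd (e t)}"

definition valid_stream :: "(nat \<Rightarrow> 'a \<times> 'a) \<Rightarrow> bool" where
  "valid_stream e \<longleftrightarrow> (\<forall>t\<ge>1. fst (e t) \<noteq> snd (e t)) \<and>
     (\<forall>s t. 1 \<le> s \<longrightarrow> s < t \<longrightarrow> edge_at e s \<noteq> edge_at e t)"

definition edges_upto :: "(nat \<Rightarrow> 'a \<times> 'a) \<Rightarrow> nat \<Rightarrow> 'a set set" where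
  "edges_upto e t = edge_at e ` {1..t}"

definition triangles :: "'a set set \<Rightarrow> 'a set set set" where
  "triangles E = {T. \<exists>u v w. u \<noteq> v \<and> v \<noteq> w \<and> w \<noteq> u \<and>
                        T = {{u, v}, {v, w}, {w, u}} \<and> T \<subseteq> E}"

definition eta :: "nat \<Rightarrow> nat \<Rightarrow> real" where
  "eta M t = max 1 ((real t - 1) * (real t - 2) / (real M * (real M - 1)))"

definition common_nbrs :: "'a set set \<Rightarrow> 'a \<Rightarrow> 'a \<Rightarrow> 'a set" where
  "common_nbrs S u v = {c. {c, u} \<in> S \<and> {c, v} \<in> S}"

definition reservoir :: "nat \<Rightarrow> nat \<Rightarrow> 'a set \<Rightarrow> 'a set set \<Rightarrow> 'a set set pmf" where
  "reservoir M t ed S =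
     (if t \<le> M then return_pmf (insert ed S)
      else bernoulli_pmf (real M / real t) \<bind>
             (\<lambda>b. if b then map_pmf (\<lambda>f. insert ed (S - {f})) (pmf_of_set S)
                  else return_pmf S))"

text \<open>One step of TRIEST-IMPR at time t; the state is (sample S, counter tau).\<close>
definition triest_step :: "nat \<Rightarrow> nat \<Rightarrow> 'a \<times> 'a \<Rightarrow> 'a set set \<times> real \<Rightarrow> ('a set set \<times> real) pmf" where
  "triest_step M t uv st =
     (let S = fst st; u = fst uv; v = snd uv;
          tau' = snd st + eta M t * real (card (common_nbrs S u v))
      in map_pmf (\<lambda>S'. (S', tau')) (reservoir M t {u, v} S))"

fun triest_impr :: "nat \<Rightarrow> (nat \<Rightarrow> 'a \<times> 'a) \<Rightarrow> nat \<Rightarrow> ('a set set \<times> real) pmf" where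
  "triest_impr M e 0 = return_pmf ({}, 0)"
| "triest_impr M e (Suc t) = triest_impr M e t \<bind> triest_step M (Suc t) (e (Suc t))"

end

theory Submission
  imports Defs
begin

lemma exp_bind:
  fixes h :: "'b \<Rightarrow> real"
  assumes "finite (set_pmf p)" "\<And>x. x \<in> set_pmf p \<Longrightarrow> finite (set_pmf (f x))"
  shows "measure_pmf.expectation (p \<bind> f) h = measure_pmf.expectation p (\<lambda>x. measure_pmf.expectation (f x) h)"
proof -
  have "measure_pmf.expectation (p \<bind> f) h = (\<Sum>a\<in>set_pmf p. pmf p a *\<^sub>R measure_pmf.expectation (f a) h)"
    using assms by (intro pmf_expectation_bind) auto
  also have "\<dots> = measure_pmf.expectation p (\<lambda>x. measure_pmf.expectation (f x) h)"
    using assms by (subst integral_measure_pmf[of "set_pmf p"]) auto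
  finally show ?thesis .
qed

lemma exp_cong:
  fixes f g :: "'b \<Rightarrow> real"
  assumes "\<And>x. x \<in> set_pmf p \<Longrightarrow> f x = g x"
  shows "measure_pmf.expectation p f = measure_pmf.expectation p g"
  using assms by (intro integral_cong_AE) (auto simp: AE_measure_pmf_iff)

lemma reservoir_exp:
  fixes h :: "'b set set \<Rightarrow> real"
  assumes "M < n" "finite S" "S \<noteq> {}"
  shows "measure_pmf.expectation (reservoir M n ed S) h =
     real M / real n * ((\<Sum>f\<in>S. h (insert ed (S - {f}))) / real (card S)) + (1 - real M / real n) * h S"
proof -
  have p: "0 \<le> real M / real n" "real M / real n \<le> 1" using assms by auto
  have "measure_pmf.expectation (reservoir M n ed S) h =
     measure_pmf.expectation (bernoulli_pmf (real M / real n))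
       (\<lambda>b. measure_pmf.expectation (if b then map_pmf (\<lambda>f. insert ed (S - {f})) (pmf_of_set S) else return_pmf S) h)"
  proof -
    have r: "reservoir M n ed S = bernoulli_pmf (real M / real n) \<bind>
             (\<lambda>b. if b then map_pmf (\<lambda>f. insert ed (S - {f})) (pmf_of_set S)
                  else return_pmf S)" using assms unfolding reservoir_def by simp
    show ?thesis unfolding r using assms by (intro exp_bind) auto
  qed
  also have "\<dots> = real M / real n * ((\<Sum>f\<in>S. h (insert ed (S - {f}))) / real (card S)) + (1 - real M / real n) * h S"
    using p assms by (simp add: integral_bernoulli_pmf integral_map_pmf integral_pmf_of_set mult.commute)
  finally show ?thesis .
qed

lemma reservoir_set_small: "n \<le> M \<Longrightarrow> set_pmf (reservoir M n ed S) = {insert ed S}"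
  unfolding reservoir_def by simp

lemma reservoir_set_big:
  assumes "M < n" "finite S" "S \<noteq> {}"
  shows "set_pmf (reservoir M n ed S) \<subseteq> insert S ((\<lambda>f. insert ed (S - {f})) ` S)"
proof -
  have r: "reservoir M n ed S = bernoulli_pmf (real M / real n) \<bind>
             (\<lambda>b. if b then map_pmf (\<lambda>f. insert ed (S - {f})) (pmf_of_set S)
                  else return_pmf S)" using assms unfolding reservoir_def by simp
  have ps: "set_pmf (pmf_of_set S) = S" using assms by simp
  show ?thesis unfolding r set_bind_pmf
    by (auto simp: ps split: if_splits)
qed

definition ff :: "nat \<Rightarrow> nat \<Rightarrow> real" where
  "ff m k = (\<Prod>i<k. real m - real i)"

lemma ff_0[simp]: "ff m 0 = 1" by (simp add: ff_def)
lemma ff_Suc: "ff m (Suc k) = ff m k * (real m - real k)" by (simp add: ff_def)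
lemma ff_Suc_Suc: "ff (Suc m) (Suc k) = real (Suc m) * ff m k"
  unfolding ff_def by (subst prod.lessThan_Suc_shift) simp
lemma ff_nz: "k \<le> m \<Longrightarrow> ff m k \<noteq> 0"
  unfolding ff_def by (auto simp: prod_zero_iff)
lemma ff_2: "ff m 2 = real m * (real m - 1)"
  by (simp add: ff_def numeral_2_eq_2)

lemma sum_ind:
  assumes "finite S" "ed \<notin> S"
  shows "(\<Sum>f\<in>S. (if A \<subseteq> insert ed (S - {f}) then 1 else 0::real)) =
         (if A - {ed} \<subseteq> S then real (card (S - (A - {ed}))) else 0)"
proof -
  have "\<And>f. f \<in> S \<Longrightarrow> (A \<subseteq> insert ed (S - {f})) = (A - {ed} \<subseteq> S \<and> f \<notin> A - {ed})"
    using assms by auto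
  then have "(\<Sum>f\<in>S. (if A \<subseteq> insert ed (S - {f}) then 1 else 0::real)) =
     (\<Sum>f\<in>S. (if A - {ed} \<subseteq> S \<and> f \<notin> A - {ed} then 1 else 0::real))"
    by (intro sum.cong) auto
  also have "\<dots> = (if A - {ed} \<subseteq> S then (\<Sum>f\<in>S. (if f \<notin> A - {ed} then 1 else 0::real)) else 0)"
    by auto
  also have "(\<Sum>f\<in>S. (if f \<notin> A - {ed} then 1 else 0::real)) = (\<Sum>f\<in>{f\<in>S. f \<notin> A - {ed}}. 1)"
    using assms by (subst sum.inter_filter) auto
  also have "{f\<in>S. f \<notin> A - {ed}} = S - (A - {ed})" by auto
  finally show ?thesis by simp
qed

lemma tri_third:
  assumes "a \<noteq> b" "b \<noteq> w" "w \<noteq> a" "{u,v} \<in> {{a,b},{b,w},{w,a}}"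
  shows "\<exists>c. {{a,b},{b,w},{w,a}} = {{u,v},{v,c},{c,u}} \<and> c \<noteq> u \<and> c \<noteq> v"
proof -
  have "(u=a\<and>v=b) \<or> (u=b\<and>v=a) \<or> (u=b\<and>v=w) \<or> (u=w\<and>v=b) \<or> (u=w\<and>v=a) \<or> (u=a\<and>v=w)"
    using assms(4) by (auto simp: doubleton_eq_iff)
  then show ?thesis
  proof (elim disjE conjE)
    assume "u=a" "v=b" then show ?thesis using assms by (intro exI[of _ w]) auto
  next
    assume "u=b" "v=a" then show ?thesis using assms by (intro exI[of _ w]) (auto simp: insert_commute)
  next
    assume "u=b" "v=w" then show ?thesis using assms by (intro exI[of _ a]) (auto simp: insert_commute)
  next
    assume "u=w" "v=b" then show ?thesis using assms by (intro exI[of _ a]) (auto simp: insert_commute)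
  next
    assume "u=w" "v=a" then show ?thesis using assms by (intro exI[of _ b]) (auto simp: insert_commute)
  next
    assume "u=a" "v=w" then show ?thesis using assms by (intro exI[of _ b]) (auto simp: insert_commute)
  qed
qed

lemma triI: "a \<noteq> b \<Longrightarrow> b \<noteq> w \<Longrightarrow> w \<noteq> a \<Longrightarrow> T = {{a, b}, {b, w}, {w, a}} \<Longrightarrow> T \<subseteq> E \<Longrightarrow> T \<in> triangles E"
  unfolding triangles_def mem_Collect_eq by (intro exI[of _ a] exI[of _ b] exI[of _ w] conjI)
lemma triE: "T \<in> triangles E \<Longrightarrow> (\<And>a b w. a \<noteq> b \<Longrightarrow> b \<noteq> w \<Longrightarrow> w \<noteq> a \<Longrightarrow> T = {{a, b}, {b, w}, {w, a}} \<Longrightarrow> T \<subseteq> E \<Longrightarrow> P) \<Longrightarrow> P"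
  unfolding triangles_def mem_Collect_eq by (elim exE conjE)
lemma tri_sub: "T \<in> triangles E \<Longrightarrow> T \<subseteq> E"
  by (erule triE) simp
lemma tri_mono: "E \<subseteq> E' \<Longrightarrow> triangles E \<subseteq> triangles E'"
proof
  fix T assume "E \<subseteq> E'" "T \<in> triangles E"
  then show "T \<in> triangles E'" by (elim triE) (rule triI, assumption+, blast)
qed

lemma tri_finite: "finite E \<Longrightarrow> finite (triangles E)"
  by (rule finite_subset[of _ "Pow E"]) (use tri_sub in auto)

lemma tri_split:
  assumes fin: "finite E" and nE: "{u, v} \<notin> E" and uv: "u \<noteq> v"
    and dbl: "\<And>x. x \<in> E \<Longrightarrow> \<exists>a b. a \<noteq> b \<and> x = {a, b}"
  shows "card (triangles (insert {u, v} E)) = card (triangles E) + card (common_nbrs E u v)"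
proof -
  define \<phi> where "\<phi> c = {{u, v}, {v, c}, {c, u}}" for c
  have cn: "c \<noteq> u \<and> c \<noteq> v" if "c \<in> common_nbrs E u v" for c
  proof -
    from that have "{c, u} \<in> E" "{c, v} \<in> E" by (auto simp: common_nbrs_def)
    obtain a b where "a \<noteq> b" "{c,u} = {a,b}" using dbl[OF \<open>{c, u} \<in> E\<close>] by blast
    moreover obtain a' b' where "a' \<noteq> b'" "{c,v} = {a',b'}" using dbl[OF \<open>{c, v} \<in> E\<close>] by blast
    ultimately show ?thesis by (metis doubleton_eq_iff)
  qed
  have eq: "triangles (insert {u, v} E) = triangles E \<union> \<phi> ` common_nbrs E u v"
  proof (intro equalityI subsetI)
    fix T assume T: "T \<in> triangles (insert {u, v} E)"
    obtain a b w where abw: "a \<noteq> b" "b \<noteq> w" "w \<noteq> a" "T = {{a, b}, {b, w}, {w, a}}"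
       "T \<subseteq> insert {u,v} E" by (rule triE[OF T])
    show "T \<in> triangles E \<union> \<phi> ` common_nbrs E u v"
    proof (cases "{u, v} \<in> T")
      case False
      then have "T \<subseteq> E" using abw(5) by blast
      then show ?thesis using triI[OF abw(1-4)] by blast
    next
      case True
      obtain c where c1: "T = \<phi> c" "c \<noteq> u" "c \<noteq> v"
        using tri_third[OF abw(1-3), of u v] True abw(4) unfolding \<phi>_def by auto
      have c2: "{c, u} \<in> T" "{c, v} \<in> T" using c1(1) by (simp_all add: \<phi>_def insert_commute)
      note c = c1 c2
      have "{c, u} \<noteq> {u, v}" "{c, v} \<noteq> {u, v}" using c(2,3) uv by (simp_all add: doubleton_eq_iff)
      then have "c \<in> common_nbrs E u v" using c(4,5) abw(5) unfolding common_nbrs_def by blast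
      then show ?thesis using c(1) by blast
    qed
  next
    fix T assume "T \<in> triangles E \<union> \<phi> ` common_nbrs E u v"
    then show "T \<in> triangles (insert {u, v} E)"
    proof
      assume "T \<in> triangles E" then show ?thesis using tri_mono[of E "insert {u,v} E"] by blast
    next
      assume "T \<in> \<phi> ` common_nbrs E u v"
      then obtain c where c: "c \<in> common_nbrs E u v" "T = \<phi> c" by blast
      have "{c, u} \<in> E" "{c, v} \<in> E" using c by (auto simp: common_nbrs_def)
      then have "T \<subseteq> insert {u,v} E" using c by (auto simp: \<phi>_def insert_commute)
      moreover have "u \<noteq> v \<and> v \<noteq> c \<and> c \<noteq> u" using cn[OF c(1)] uv by auto
      ultimately show ?thesis using c(2) unfolding \<phi>_def by (intro triI[of u v c]) auto
    qed
  qed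
  have "\<phi> c \<notin> triangles E" for c using tri_sub[of "\<phi> c" E] nE by (auto simp: \<phi>_def)
  then have disj: "triangles E \<inter> \<phi> ` common_nbrs E u v = {}" by blast
  have inj: "inj_on \<phi> (common_nbrs E u v)"
  proof
    fix c c' assume c: "c \<in> common_nbrs E u v" "c' \<in> common_nbrs E u v" "\<phi> c = \<phi> c'"
    then have "\<Union>(\<phi> c) = \<Union>(\<phi> c')" by simp
    then have "{u, v, c} = {u, v, c'}" by (auto simp: \<phi>_def)
    then show "c = c'" using cn[OF c(1)] cn[OF c(2)] by (auto simp: insert_eq_iff)
  qed
  have finC: "finite (common_nbrs E u v)"
  proof (rule finite_subset[of _ "\<Union>E"])
    show "common_nbrs E u v \<subseteq> \<Union>E" by (auto simp: common_nbrs_def)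
    show "finite (\<Union>E)" using fin dbl by (intro finite_Union) force+
  qed
  show ?thesis unfolding eq
    by (subst card_Un_disjoint) (use disj fin finC inj in \<open>auto simp: tri_finite card_image\<close>)
qed


lemma finC:
  assumes "finite E" "\<And>x. x \<in> E \<Longrightarrow> \<exists>a b. a \<noteq> b \<and> x = {a, b}"
  shows "finite (common_nbrs E u v)"
proof (rule finite_subset[of _ "\<Union>E"])
  show "common_nbrs E u v \<subseteq> \<Union>E" by (auto simp: common_nbrs_def)
  show "finite (\<Union>E)" using assms by (intro finite_Union) force+
qed

lemma tri_empty: "triangles {} = {}"
  by (auto elim: triE)

lemma ar0: "(m::real) > 0 \<Longrightarrow> n > 0 \<Longrightarrow> m / n * ((m - k) / m) + (1 - m / n) * 1 = (1 - k / n) * 1"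
  by (simp add: field_simps)

lemma ar0': "(m::real) > 0 \<Longrightarrow> n > 0 \<Longrightarrow> m / n * ((m - k) / m) + (1 - m / n) * 0 = ((m - k) / n) * 1"
  by (simp add: field_simps)

lemma ar1:
  assumes "k \<le> t"
  shows "(1 - real k / real (Suc t)) * (ff M k / ff t k) = ff M k / ff (Suc t) k"
proof -
  have h: "ff (Suc t) k * (real (Suc t) - real k) = real (Suc t) * ff t k"
    using ff_Suc[of "Suc t" k] ff_Suc_Suc[of t k] by simp
  have nz: "ff t k \<noteq> 0" using ff_nz assms by blast
  have pos: "real (Suc t) - real k > 0" using assms by simp
  have eq: "ff (Suc t) k = real (Suc t) * ff t k / (real (Suc t) - real k)"
    using h pos by (simp add: field_simps)
  have "(1 - real k / real (Suc t)) = (real (Suc t) - real k) / real (Suc t)" by (simp add: field_simps)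
  then show ?thesis unfolding eq using nz pos by (simp add: field_simps)
qed

lemma ar2:
  assumes "j \<le> t"
  shows "(real M - real j) / real (Suc t) * (ff M j / ff t j) = ff M (Suc j) / ff (Suc t) (Suc j)"
  unfolding ff_Suc_Suc ff_Suc[of M j] using ff_nz[OF assms] by (simp add: field_simps)

lemma eta_Suc: "eta M (Suc t) = max 1 (real t * (real t - 1) / (real M * (real M - 1)))"
  unfolding eta_def by (simp add: algebra_simps)

lemma sq_mono: "t \<le> M \<Longrightarrow> M \<ge> 1 \<Longrightarrow> real t * (real t - 1) \<le> real M * (real M - 1)"
proof (cases "t = 0")
  case False
  assume "t \<le> M" "M \<ge> 1"
  then show ?thesis using False by (intro mult_mono) auto
qed auto

lemma eta_le: "t \<le> M \<Longrightarrow> M \<ge> 2 \<Longrightarrow> eta M (Suc t) = 1"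
proof -
  assume a: "t \<le> M" "M \<ge> 2"
  have "real M * (real M - 1) > 0" using a by simp
  then have "real t * (real t - 1) / (real M * (real M - 1)) \<le> 1"
    using sq_mono[OF a(1)] a(2) by (simp add: divide_le_eq)
  then show ?thesis unfolding eta_Suc by simp
qed

lemma ar3:
  assumes "2 \<le> t" "M \<ge> 2"
  shows "eta M (Suc t) * (ff (min M t) 2 / ff t 2) = 1"
proof (cases "t \<le> M")
  case True
  have "ff t 2 \<noteq> 0" using ff_nz assms by auto
  then show ?thesis using eta_le[OF True assms(2)] True by (simp add: min_def)
next
  case False
  have p: "real M * (real M - 1) > 0" using assms by simp
  have "real M * (real M - 1) < real t * (real t - 1)"
    using False assms by (intro mult_strict_mono) auto
  then have "real t * (real t - 1) / (real M * (real M - 1)) \<ge> 1" using p by simp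
  then have "eta M (Suc t) = real t * (real t - 1) / (real M * (real M - 1))"
    unfolding eta_Suc by simp
  moreover have q: "real t * (real t - 1) > 0" using assms by simp
  moreover have "ff (min M t) 2 / ff t 2 = real M * (real M - 1) / (real t * (real t - 1))"
    using False by (simp add: ff_2 min_def)
  ultimately show ?thesis using p q assms False by simp
qed


context
  fixes M :: nat and e :: "nat \<Rightarrow> 'a \<times> 'a"
  assumes M6: "M \<ge> 6" and V: "valid_stream e"
begin

lemma E_Suc: "edges_upto e (Suc t) = insert (edge_at e (Suc t)) (edges_upto e t)"
  unfolding edges_upto_def by (simp add: atLeastAtMostSuc_conv)

lemma E_0: "edges_upto e 0 = {}"
  unfolding edges_upto_def by simp

lemma fin_E: "finite (edges_upto e t)"
  unfolding edges_upto_def by simp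

lemma V2: "1 \<le> s \<Longrightarrow> s < t \<Longrightarrow> edge_at e s \<noteq> edge_at e t"
  using V unfolding valid_stream_def by blast

lemma V1: "1 \<le> t \<Longrightarrow> fst (e t) \<noteq> snd (e t)"
  using V unfolding valid_stream_def by blast

lemma new_notin: "edge_at e (Suc t) \<notin> edges_upto e t"
proof
  assume "edge_at e (Suc t) \<in> edges_upto e t"
  then obtain s where s: "s \<in> {1..t}" "edge_at e (Suc t) = edge_at e s" unfolding edges_upto_def by blast
  then show False using V2[of s "Suc t"] by simp
qed

lemma card_E: "card (edges_upto e t) = t"
  by (induction t) (simp_all add: E_0 E_Suc fin_E new_notin)

lemma uv: "t \<ge> 1 \<Longrightarrow> fst (e t) \<noteq> snd (e t)"
  by (rule V1)

lemma dbl: "x \<in> edges_upto e t \<Longrightarrow> \<exists>a b. a \<noteq> b \<and> x = {a, b}"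
proof -
  assume "x \<in> edges_upto e t"
  then obtain s where s: "s \<in> {1..t}" "x = edge_at e s" unfolding edges_upto_def by blast
  then have "fst (e s) \<noteq> snd (e s)" using V1[of s] by simp
  then show ?thesis using s(2) unfolding edge_at_def by blast
qed

lemma step_eq: "triest_step M n (e n) st = map_pmf (\<lambda>S'. (S', snd st + eta M n * real (card (common_nbrs (fst st) (fst (e n)) (snd (e n)))))) (reservoir M n (edge_at e n) (fst st))"
  by (simp add: triest_step_def Let_def edge_at_def)

lemma inv: "st \<in> set_pmf (triest_impr M e t) \<Longrightarrow> fst st \<subseteq> edges_upto e t \<and> card (fst st) = min t M"
proof (induction t arbitrary: st)
  case 0
  then show ?case by (simp add: E_0)
next
  case (Suc t)
  from Suc.prems obtain st0 where st0: "st0 \<in> set_pmf (triest_impr M e t)"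
    and st: "st \<in> set_pmf (triest_step M (Suc t) (e (Suc t)) st0)" by auto
  define S where "S = fst st0"
  have IH: "S \<subseteq> edges_upto e t" "card S = min t M" using Suc.IH[OF st0] by (auto simp: S_def)
  have finS: "finite S" using IH(1) fin_E finite_subset by blast
  have nS: "edge_at e (Suc t) \<notin> S" using IH(1) new_notin by blast
  have r: "fst st \<in> set_pmf (reservoir M (Suc t) (edge_at e (Suc t)) S)"
    using st by (auto simp: step_eq S_def)
  show ?case
  proof (cases "Suc t \<le> M")
    case True
    then have fs: "fst st = insert (edge_at e (Suc t)) S" using r by (simp add: reservoir_set_small)
    have c1: "card (fst st) = Suc (card S)" unfolding fs using finS nS by simp
    have c2: "card S = t" using IH(2) True by simp
    have "fst st \<subseteq> edges_upto e (Suc t)" unfolding fs E_Suc using IH(1) by blast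
    then show ?thesis using c1 c2 True by simp
  next
    case False
    then have cS: "card S = M" using IH by simp
    then have ne: "S \<noteq> {}" using M6 by auto
    have "fst st \<in> insert S ((\<lambda>f. insert (edge_at e (Suc t)) (S - {f})) ` S)"
      using r reservoir_set_big[of M "Suc t" S] False finS ne by auto
    then show ?thesis
    proof
      assume fs: "fst st = S"
      have "fst st \<subseteq> edges_upto e (Suc t)" unfolding fs E_Suc using IH(1) by blast
      then show ?thesis using cS False fs by simp
    next
      assume "fst st \<in> (\<lambda>f. insert (edge_at e (Suc t)) (S - {f})) ` S"
      then obtain f where f: "f \<in> S" "fst st = insert (edge_at e (Suc t)) (S - {f})" by blast
      have "card (S - {f}) = M - 1" using f(1) finS cS by (simp add: card_Diff_singleton)
      moreover have "edge_at e (Suc t) \<notin> S - {f}" using nS by blast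
      moreover have "finite (S - {f})" using finS by blast
      ultimately have "card (fst st) = M" unfolding f(2) using M6 by simp
      moreover have "fst st \<subseteq> edges_upto e (Suc t)" unfolding f(2) E_Suc using IH(1) by blast
      ultimately show ?thesis using False by simp
    qed
  qed
qed

lemma fin_res: "st \<in> set_pmf (triest_impr M e t) \<Longrightarrow> finite (set_pmf (reservoir M (Suc t) ed (fst st)))"
proof -
  assume st: "st \<in> set_pmf (triest_impr M e t)"
  note I = inv[OF st]
  have finS: "finite (fst st)" using I fin_E finite_subset by blast
  show ?thesis
  proof (cases "Suc t \<le> M")
    case True then show ?thesis by (simp add: reservoir_set_small)
  next
    case False
    then have "fst st \<noteq> {}" using I M6 by auto
    then show ?thesis using False finS
      by (intro finite_subset[OF reservoir_set_big]) auto
  qed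
qed

lemma fin_D: "finite (set_pmf (triest_impr M e t))"
proof (induction t)
  case 0 then show ?case by simp
next
  case (Suc t)
  show ?case
    unfolding triest_impr.simps set_bind_pmf
    using Suc fin_res by (auto simp: step_eq)
qed

lemma exp_Suc:
  fixes h :: "'a set set \<times> real \<Rightarrow> real"
  shows "measure_pmf.expectation (triest_impr M e (Suc t)) h =
    measure_pmf.expectation (triest_impr M e t) (\<lambda>st. measure_pmf.expectation (reservoir M (Suc t) (edge_at e (Suc t)) (fst st))
      (\<lambda>S'. h (S', snd st + eta M (Suc t) * real (card (common_nbrs (fst st) (fst (e (Suc t))) (snd (e (Suc t))))))))"
  unfolding triest_impr.simps
  by (subst exp_bind) (use fin_D fin_res in \<open>auto simp: step_eq integral_map_pmf\<close>)


lemma incl: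
  "A \<subseteq> edges_upto e t \<Longrightarrow>
   measure_pmf.expectation (triest_impr M e t) (\<lambda>st. if A \<subseteq> fst st then 1 else 0) = ff (min M t) (card A) / ff t (card A)"
proof (induction t arbitrary: A)
  case 0
  then show ?case by (simp add: E_0)
next
  case (Suc t)
  define new where "new = edge_at e (Suc t)"
  define k where "k = card A"
  have finA: "finite A" using Suc.prems fin_E finite_subset by blast
  have kle: "k \<le> Suc t" unfolding k_def using card_mono[OF fin_E Suc.prems] card_E by simp
  let ?ind = "\<lambda>B S. if B \<subseteq> S then 1 else (0::real)"
  have ES: "measure_pmf.expectation (triest_impr M e (Suc t)) (\<lambda>st. ?ind A (fst st)) =
     measure_pmf.expectation (triest_impr M e t) (\<lambda>st. measure_pmf.expectation (reservoir M (Suc t) new (fst st)) (\<lambda>S'. ?ind A S'))"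
    unfolding new_def by (subst exp_Suc) simp
  show ?case
  proof (cases "Suc t \<le> M")
    case True
    have "measure_pmf.expectation (triest_impr M e t) (\<lambda>st. measure_pmf.expectation (reservoir M (Suc t) new (fst st)) (\<lambda>S'. ?ind A S'))
        = measure_pmf.expectation (triest_impr M e t) (\<lambda>st. 1)"
    proof (rule exp_cong)
      fix st assume st: "st \<in> set_pmf (triest_impr M e t)"
      have "fst st = edges_upto e t" using inv[OF st] True fin_E card_E by (intro card_subset_eq) auto
      then have "A \<subseteq> insert new (fst st)" using Suc.prems unfolding new_def E_Suc by simp
      then show "measure_pmf.expectation (reservoir M (Suc t) new (fst st)) (\<lambda>S'. ?ind A S') = 1"
        using True unfolding reservoir_def by simp
    qed
    moreover have "ff (Suc t) k \<noteq> 0" using ff_nz kle by blast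
    ultimately show ?thesis using ES True by (simp add: min_def k_def[symmetric])
  next
    case False
    then have tM: "M \<le> t" by simp
    have inner: "measure_pmf.expectation (reservoir M (Suc t) new (fst st)) (\<lambda>S'. ?ind A S') =
        real M / real (Suc t) * ((if A - {new} \<subseteq> fst st then real (card (fst st - (A - {new}))) else 0) / real M)
        + (1 - real M / real (Suc t)) * ?ind A (fst st)"
      if st: "st \<in> set_pmf (triest_impr M e t)" for st
    proof -
      note I = inv[OF st]
      have finS: "finite (fst st)" using I fin_E finite_subset by blast
      have cS: "card (fst st) = M" using I tM by simp
      have ne: "fst st \<noteq> {}" using cS M6 by auto
      have nS: "new \<notin> fst st" using I new_notin unfolding new_def by blast
      show ?thesis using reservoir_exp[OF _ finS ne, of M "Suc t" new] False sum_ind[OF finS nS, of A] cS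
        by simp
    qed
    show ?thesis
    proof (cases "new \<in> A")
      case False
      have AE: "A \<subseteq> edges_upto e t" using Suc.prems False unfolding new_def E_Suc by blast
      have klet: "k \<le> t" unfolding k_def using card_mono[OF fin_E AE] card_E by simp
      have "measure_pmf.expectation (triest_impr M e t) (\<lambda>st. measure_pmf.expectation (reservoir M (Suc t) new (fst st)) (\<lambda>S'. ?ind A S'))
          = measure_pmf.expectation (triest_impr M e t) (\<lambda>st. (1 - real k / real (Suc t)) * ?ind A (fst st))"
      proof (rule exp_cong)
        fix st assume st: "st \<in> set_pmf (triest_impr M e t)"
        note I = inv[OF st]
        have cS: "card (fst st) = M" using I tM by simp
        have finS: "finite (fst st)" using I fin_E finite_subset by blast
        have Mpos: "real M > 0" using M6 by simp
        have "A - {new} = A" using False by simp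
        moreover have c: "A \<subseteq> fst st \<Longrightarrow> real (card (fst st - A)) = real M - real k"
          using cS finA finS card_mono[OF finS, of A] unfolding k_def by (simp add: card_Diff_subset of_nat_diff)
        ultimately show "measure_pmf.expectation (reservoir M (Suc t) new (fst st)) (\<lambda>S'. ?ind A S') =
            (1 - real k / real (Suc t)) * ?ind A (fst st)"
        proof (cases "A \<subseteq> fst st")
          case True
          have "measure_pmf.expectation (reservoir M (Suc t) new (fst st)) (\<lambda>S'. ?ind A S') =
             real M / real (Suc t) * ((real M - real k) / real M) + (1 - real M / real (Suc t)) * 1"
            using inner[OF st] c[OF True] True \<open>A - {new} = A\<close> by simp
          also have "\<dots> = (1 - real k / real (Suc t)) * 1" using Mpos by (intro ar0) auto
          finally show ?thesis using True by simp
        qed (use inner[OF st] in simp)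
      qed
      also have "\<dots> = (1 - real k / real (Suc t)) * (ff M k / ff t k)"
        using Suc.IH[OF AE] tM by (simp add: k_def min_def)
      also have "\<dots> = ff M k / ff (Suc t) k" by (rule ar1[OF klet])
      finally show ?thesis using ES tM by (simp add: k_def min_def)
    next
      case True
      define A' where "A' = A - {new}"
      define j where "j = card A'"
      have AE: "A' \<subseteq> edges_upto e t" using Suc.prems unfolding A'_def new_def E_Suc by blast
      have jlet: "j \<le> t" unfolding j_def using card_mono[OF fin_E AE] card_E by simp
      have kj: "k = Suc j" unfolding k_def j_def A'_def using card_Suc_Diff1[OF finA True] by simp
      have "measure_pmf.expectation (triest_impr M e t) (\<lambda>st. measure_pmf.expectation (reservoir M (Suc t) new (fst st)) (\<lambda>S'. ?ind A S'))
          = measure_pmf.expectation (triest_impr M e t) (\<lambda>st. ((real M - real j) / real (Suc t)) * ?ind A' (fst st))"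
      proof (rule exp_cong)
        fix st assume st: "st \<in> set_pmf (triest_impr M e t)"
        note I = inv[OF st]
        have cS: "card (fst st) = M" using I tM by simp
        have finS: "finite (fst st)" using I fin_E finite_subset by blast
        have Mpos: "real M > 0" using M6 by simp
        have nS: "new \<notin> fst st" using I new_notin unfolding new_def by blast
        have finA': "finite A'" using finA unfolding A'_def by simp
        have "\<not> A \<subseteq> fst st" using nS True by blast
        moreover have c: "A' \<subseteq> fst st \<Longrightarrow> real (card (fst st - A')) = real M - real j"
          using cS finA' finS card_mono[OF finS, of A'] unfolding j_def by (simp add: card_Diff_subset of_nat_diff)
        ultimately show "measure_pmf.expectation (reservoir M (Suc t) new (fst st)) (\<lambda>S'. ?ind A S') =
            ((real M - real j) / real (Suc t)) * ?ind A' (fst st)"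
        proof (cases "A' \<subseteq> fst st")
          case True
          have "measure_pmf.expectation (reservoir M (Suc t) new (fst st)) (\<lambda>S'. ?ind A S') =
             real M / real (Suc t) * ((real M - real j) / real M) + (1 - real M / real (Suc t)) * 0"
            using inner[OF st] c[OF True] True \<open>\<not> A \<subseteq> fst st\<close> unfolding A'_def[symmetric] by simp
          also have "\<dots> = ((real M - real j) / real (Suc t)) * 1" using Mpos by (intro ar0') auto
          finally show ?thesis using True by simp
        qed (use inner[OF st] \<open>\<not> A \<subseteq> fst st\<close> in \<open>simp add: A'_def[symmetric]\<close>)
      qed
      also have "\<dots> = ((real M - real j) / real (Suc t)) * (ff M j / ff t j)"
        using Suc.IH[OF AE] tM by (simp add: j_def min_def)
      also have "\<dots> = ff M (Suc j) / ff (Suc t) (Suc j)" by (rule ar2[OF jlet])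
      finally show ?thesis using ES tM by (simp add: kj[unfolded k_def] min_def)
    qed
  qed
qed


lemma card2: "u \<noteq> v \<Longrightarrow> card {{c, u}, {c, v}} = 2"
  by (auto simp: doubleton_eq_iff)

lemma tri_Suc: "real (card (triangles (edges_upto e (Suc t)))) =
   real (card (triangles (edges_upto e t))) + real (card (common_nbrs (edges_upto e t) (fst (e (Suc t))) (snd (e (Suc t)))))"
proof -
  have "edges_upto e (Suc t) = insert {fst (e (Suc t)), snd (e (Suc t))} (edges_upto e t)"
    unfolding E_Suc edge_at_def ..
  moreover have "{fst (e (Suc t)), snd (e (Suc t))} \<notin> edges_upto e t"
    using new_notin[of t] unfolding edge_at_def .
  ultimately show ?thesis
    using tri_split[OF fin_E, of "fst (e (Suc t))" "snd (e (Suc t))" t] uv[of "Suc t"] dbl by simp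
qed

lemma Etau: "measure_pmf.expectation (triest_impr M e t) snd = real (card (triangles (edges_upto e t)))"
proof (induction t)
  case 0
  then show ?case by (simp add: E_0 tri_empty)
next
  case (Suc t)
  define u where "u = fst (e (Suc t))"
  define v where "v = snd (e (Suc t))"
  define C where "C = common_nbrs (edges_upto e t) u v"
  define q where "q = ff (min M t) 2 / ff t 2"
  have uv': "u \<noteq> v" using uv[of "Suc t"] unfolding u_def v_def by simp
  have finCC: "finite C" unfolding C_def by (rule finC[OF fin_E]) (rule dbl)
  have int: "integrable (measure_pmf (triest_impr M e t)) f" for f :: "_ \<Rightarrow> real"
    by (rule integrable_measure_pmf_finite[OF fin_D])
  have E1: "measure_pmf.expectation (triest_impr M e (Suc t)) snd =
     measure_pmf.expectation (triest_impr M e t) (\<lambda>st. snd st + eta M (Suc t) * real (card (common_nbrs (fst st) u v)))"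
    unfolding u_def v_def by (subst exp_Suc) simp
  also have "\<dots> = measure_pmf.expectation (triest_impr M e t) snd +
      eta M (Suc t) * measure_pmf.expectation (triest_impr M e t) (\<lambda>st. real (card (common_nbrs (fst st) u v)))"
    by (subst Bochner_Integration.integral_add) (use int in auto)
  also have "measure_pmf.expectation (triest_impr M e t) (\<lambda>st. real (card (common_nbrs (fst st) u v))) =
     measure_pmf.expectation (triest_impr M e t) (\<lambda>st. \<Sum>c\<in>C. (if {{c, u}, {c, v}} \<subseteq> fst st then 1 else 0))"
  proof (rule exp_cong)
    fix st assume st: "st \<in> set_pmf (triest_impr M e t)"
    have sub: "fst st \<subseteq> edges_upto e t" using inv[OF st] by blast
    have "common_nbrs (fst st) u v = {c \<in> C. {{c, u}, {c, v}} \<subseteq> fst st}"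
      using sub unfolding C_def common_nbrs_def by blast
    then have "real (card (common_nbrs (fst st) u v)) = (\<Sum>c\<in>{c \<in> C. {{c, u}, {c, v}} \<subseteq> fst st}. 1)"
      by simp
    also have "\<dots> = (\<Sum>c\<in>C. (if {{c, u}, {c, v}} \<subseteq> fst st then 1 else 0))"
      by (rule sum.inter_filter[OF finCC])
    finally show "real (card (common_nbrs (fst st) u v)) = (\<Sum>c\<in>C. (if {{c, u}, {c, v}} \<subseteq> fst st then 1 else 0))" .
  qed
  also have "\<dots> = (\<Sum>c\<in>C. measure_pmf.expectation (triest_impr M e t) (\<lambda>st. if {{c, u}, {c, v}} \<subseteq> fst st then 1 else 0))"
    by (rule Bochner_Integration.integral_sum) (rule int)
  also have "\<dots> = (\<Sum>c\<in>C. q)"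
  proof (rule sum.cong)
    fix c assume c: "c \<in> C"
    have sub: "{{c, u}, {c, v}} \<subseteq> edges_upto e t" using c unfolding C_def common_nbrs_def by blast
    then show "measure_pmf.expectation (triest_impr M e t) (\<lambda>st. if {{c, u}, {c, v}} \<subseteq> fst st then 1 else 0) = q"
      unfolding q_def using incl[OF sub] card2[OF uv', of c] by simp
  qed simp
  also have "\<dots> = real (card C) * q" by simp
  finally have E2: "measure_pmf.expectation (triest_impr M e (Suc t)) snd =
     measure_pmf.expectation (triest_impr M e t) snd + eta M (Suc t) * (real (card C) * q)" .
  have E3: "eta M (Suc t) * (real (card C) * q) = real (card C)"
  proof (cases "C = {}")
    case False
    then obtain c where c: "c \<in> C" by blast
    have "{{c, u}, {c, v}} \<subseteq> edges_upto e t" using c unfolding C_def common_nbrs_def by blast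
    then have "card {{c, u}, {c, v}} \<le> card (edges_upto e t)" by (rule card_mono[OF fin_E])
    then have t2: "2 \<le> t" unfolding card2[OF uv', of c] card_E .
    have M2: "2 \<le> M" using M6 by simp
    have "eta M (Suc t) * q = 1" unfolding q_def by (rule ar3[OF t2 M2])
    then show ?thesis by (simp add: algebra_simps)
  qed simp
  have TS: "real (card (triangles (edges_upto e (Suc t)))) = real (card (triangles (edges_upto e t))) + real (card C)"
    unfolding C_def u_def v_def by (rule tri_Suc)
  show ?case unfolding E2 E3 Suc.IH TS ..
qed

lemma det: "t \<le> M \<Longrightarrow> st \<in> set_pmf (triest_impr M e t) \<Longrightarrow> snd st = real (card (triangles (edges_upto e t)))"
proof (induction t arbitrary: st)
  case 0
  then show ?case by (simp add: E_0 tri_empty)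
next
  case (Suc t)
  from Suc.prems(2) obtain st0 where st0: "st0 \<in> set_pmf (triest_impr M e t)"
    and st: "st \<in> set_pmf (triest_step M (Suc t) (e (Suc t)) st0)" by auto
  have fs: "fst st0 = edges_upto e t" using inv[OF st0] Suc.prems(1) fin_E card_E by (intro card_subset_eq) auto
  have "snd st = snd st0 + eta M (Suc t) * real (card (common_nbrs (fst st0) (fst (e (Suc t))) (snd (e (Suc t)))))"
    using st by (auto simp: step_eq)
  moreover have "eta M (Suc t) = 1" using eta_le[of t M] Suc.prems(1) M6 by simp
  moreover have "snd st0 = real (card (triangles (edges_upto e t)))" using Suc.IH[OF _ st0] Suc.prems(1) by simp
  ultimately show ?case using tri_Suc fs by simp
qed

end

theorem theorem4p12:
  fixes M :: nat and e :: "nat \<Rightarrow> 'a \<times> 'a" and t :: nat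
  assumes "M \<ge> 6" and "valid_stream e" and "t \<ge> 1"
  shows "(t \<le> M \<longrightarrow> (\<forall>st \<in> set_pmf (triest_impr M e t).
              snd st = real (card (triangles (edges_upto e t)))))
       \<and> (t > M \<longrightarrow> measure_pmf.expectation (triest_impr M e t) snd
              = real (card (triangles (edges_upto e t))))"
  using det[OF assms(1,2)] Etau[OF assms(1,2)] by blast

end
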